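(* For graphs $G,G_1,G_2$ and inflows, the following hold: (1) If $(in,G)\in(in_1,G_1)\bullet(in_2,G_2)$, $in_1\sim_{G_1}in_1'$, $in_2\sim_{G_2}in_2'$ and $(in',G)\in(in_1',G_1)\bullet(in_2',G_2)$, then $in\sim_G in'$. (2) If $(in,G)\in(in_1,G_1)\bullet(in_2,G_2)$ and $in\sim_G in'$, then there exist $in_1',in_2'$ with $in_1\sim_{G_1}in_1'$, $in_2\sim_{G_2}in_2'$ and $(in',G)\in(in_1',G_1)\bullet(in_2',G_2)$.
   Context: Fix a flow domain $(D,\sqsubseteq,\sqcup,+,\cdot,0,1)$ (a positive partially ordered $\omega$-complete semiring: $(D,\sqsubseteq)$ an $\omega$-cpo with join $\sqcup$, $(D,+,\cdot,0,1)$ a semiring, $+,\cdot$ continuous, $0$ least element) and a node label join-semilattice $(A,\sqsubseteq,\sqcup,a_e)$. A graph $G=(N,N^o,\lambda,\varepsilon)$ has finite node set $N=\mathrm{dom}(G)$, finite sink set $N^o$ disjoint from $N$, $\lambda\colon N\to A$, $\varepsilon\colon N\times(N\cup N^o)\to D$. $G_1\uplus G_2$ is defined iff $N_1\cap N_2=\emptyset$, and equals $(N_1\cup N_2,(N_1^o\setminus N_2)\cup(N_2^o\setminus N_1),\lambda_1\uplus\lambda_2,\varepsilon')$ with $\varepsilon'(n_1,n_2)=\varepsilon_i(n_1,n_2)$ if $n_1\in N_i$ and $n_2\in N_i\cup N_i^o$, and $0$ otherwise. Capacity: least fixpoint $\mathrm{cap}(G)(n,n')=\delta(n,n')+\sum_{n''\in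 N}\varepsilon(n,n'')\cdot\mathrm{cap}(G)(n'',n')$; flow: $\mathrm{flow}(in,G)(n)=\sum_{n'\in N}in(n')\cdot\mathrm{cap}(G)(n',n)$ for an inflow $in\colon N\to D$. Projection (for $G=G_1\uplus G_2$): $\mathrm{proj}(in,G)(G_1)(n)=in(n)+\sum_{n'\in\mathrm{dom}(G)\setminus\mathrm{dom}(G_1)}\mathrm{flow}(in,G)(n')\cdot\varepsilon(n',n)$ for $n\in\mathrm{dom}(G_1)$. Composition of inflow/graph pairs: $(in,G)\in(in_1,G_1)\bullet(in_2,G_2)$ iff $G=G_1\uplus G_2$ and $\mathrm{proj}(in,G)(G_i)=in_i$ for $i=1,2$. Inflow equivalence: $in\sim_G in'$ iff $\mathrm{flow}(in,G)=\mathrm{flow}(in',G)$. *)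

theory Defs
  imports Main
begin

definition is_lub :: "'a::order set \<Rightarrow> 'a \<Rightarrow> bool" where
  "is_lub S x \<longleftrightarrow> (\<forall>y\<in>S. y \<le> x) \<and> (\<forall>z. (\<forall>y\<in>S. y \<le> z) \<longrightarrow> x \<le> z)"

definition omega_chain :: "(nat \<Rightarrow> 'a::order) \<Rightarrow> bool" where
  "omega_chain c \<longleftrightarrow> (\<forall>i. c i \<le> c (Suc i))"

definition flow_domain :: "'d::{semiring_1,order} itself \<Rightarrow> bool" where
  "flow_domain _ \<longleftrightarrow>
     (\<forall>x::'d. 0 \<le> x) \<and>
     (\<forall>c::nat \<Rightarrow> 'd. omega_chain c \<longrightarrow> (\<exists>s. is_lub (range c) s)) \<and>
     (\<forall>(c::nat \<Rightarrow> 'd) s a. omega_chain c \<longrightarrow> is_lub (range c) s \<longrightarrow>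
        is_lub (range (\<lambda>i. a + c i)) (a + s) \<and>
        is_lub (range (\<lambda>i. c i + a)) (s + a) \<and>
        is_lub (range (\<lambda>i. a * c i)) (a * s) \<and>
        is_lub (range (\<lambda>i. c i * a)) (s * a))"

record ('n, 'a, 'd) graph =
  nodes :: "'n set"
  sinks :: "'n set"
  lab :: "'n \<Rightarrow> 'a"
  edge :: "'n \<Rightarrow> 'n \<Rightarrow> 'd"

definition wf_graph :: "('n, 'a, 'd) graph \<Rightarrow> bool" where
  "wf_graph G \<longleftrightarrow> finite (nodes G) \<and> finite (sinks G) \<and> nodes G \<inter> sinks G = {}"

text \<open>G = G1 \<uplus> G2, with labels and edge functions compared on their domains
  (labels on N, edges on N \<times> (N \<union> N^o)).\<close>
definition is_graph_union ::
  "('n, 'a, 'd::zero) graph \<Rightarrow> ('n, 'a, 'd) graph \<Rightarrow> ('n, 'a, 'd) graph \<Rightarrow> bool" where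
  "is_graph_union G G1 G2 \<longleftrightarrow>
     nodes G1 \<inter> nodes G2 = {} \<and>
     nodes G = nodes G1 \<union> nodes G2 \<and>
     sinks G = (sinks G1 - nodes G2) \<union> (sinks G2 - nodes G1) \<and>
     (\<forall>n\<in>nodes G. lab G n = (if n \<in> nodes G1 then lab G1 n else lab G2 n)) \<and>
     (\<forall>n1\<in>nodes G. \<forall>n2\<in>nodes G \<union> sinks G.
        edge G n1 n2 =
          (if n1 \<in> nodes G1 \<and> n2 \<in> nodes G1 \<union> sinks G1 then edge G1 n1 n2
           else if n1 \<in> nodes G2 \<and> n2 \<in> nodes G2 \<union> sinks G2 then edge G2 n1 n2
           else 0))"

definition kdelta :: "'n \<Rightarrow> 'n \<Rightarrow> 'd::{zero,one}" where
  "kdelta n n' = (if n = n' then 1 else 0)"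

definition is_cap :: "('n, 'a, 'd::{semiring_1,order}) graph \<Rightarrow> ('n \<Rightarrow> 'n \<Rightarrow> 'd) \<Rightarrow> bool" where
  "is_cap G c \<longleftrightarrow>
     (\<forall>n\<in>nodes G. \<forall>n'\<in>nodes G \<union> sinks G.
        c n n' = kdelta n n' + (\<Sum>n''\<in>nodes G. edge G n n'' * c n'' n')) \<and>
     (\<forall>c'. (\<forall>n\<in>nodes G. \<forall>n'\<in>nodes G \<union> sinks G.
              c' n n' = kdelta n n' + (\<Sum>n''\<in>nodes G. edge G n n'' * c' n'' n'))
           \<longrightarrow> (\<forall>n\<in>nodes G. \<forall>n'\<in>nodes G \<union> sinks G. c n n' \<le> c' n n'))"

definition cap :: "('n, 'a, 'd::{semiring_1,order}) graph \<Rightarrow> 'n \<Rightarrow> 'n \<Rightarrow> 'd" where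
  "cap G = (SOME c. is_cap G c)"

definition flow :: "('n \<Rightarrow> 'd) \<Rightarrow> ('n, 'a, 'd::{semiring_1,order}) graph \<Rightarrow> 'n \<Rightarrow> 'd" where
  "flow fin G n = (\<Sum>n'\<in>nodes G. fin n' * cap G n' n)"

text \<open>proj(in,G)(G1), where G1 is given by its node set N1.\<close>
definition proj :: "('n \<Rightarrow> 'd) \<Rightarrow> ('n, 'a, 'd::{semiring_1,order}) graph \<Rightarrow> 'n set \<Rightarrow> 'n \<Rightarrow> 'd" where
  "proj fin G N1 n = fin n + (\<Sum>n'\<in>nodes G - N1. flow fin G n' * edge G n' n)"

text \<open>(in,G) \<in> (in1,G1) \<bullet> (in2,G2); finlows are compared on the node sets.\<close>
definition in_comp ::
  "('n \<Rightarrow> 'd) \<Rightarrow> ('n, 'a, 'd::{semiring_1,order}) graph \<Rightarrow>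
   ('n \<Rightarrow> 'd) \<Rightarrow> ('n, 'a, 'd) graph \<Rightarrow> ('n \<Rightarrow> 'd) \<Rightarrow> ('n, 'a, 'd) graph \<Rightarrow> bool" where
  "in_comp fin G fin1 G1 fin2 G2 \<longleftrightarrow>
     is_graph_union G G1 G2 \<and>
     (\<forall>n\<in>nodes G1. proj fin G (nodes G1) n = fin1 n) \<and>
     (\<forall>n\<in>nodes G2. proj fin G (nodes G2) n = fin2 n)"

definition inflow_equiv :: "('n \<Rightarrow> 'd) \<Rightarrow> ('n, 'a, 'd::{semiring_1,order}) graph \<Rightarrow> ('n \<Rightarrow> 'd) \<Rightarrow> bool" where
  "inflow_equiv fin G fin' \<longleftrightarrow> (\<forall>n\<in>nodes G. flow fin G n = flow fin' G n)"

end

theory Submission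
  imports Defs
begin

definition lubc :: "(nat \<Rightarrow> 'd::order) \<Rightarrow> 'd" where
  "lubc c = (THE s. is_lub (range c) s)"

lemma is_lub_unique: "is_lub S (x::'d::order) \<Longrightarrow> is_lub S y \<Longrightarrow> x = y"
  unfolding is_lub_def by (meson order_antisym)

lemma lubc_eq: "is_lub (range c) s \<Longrightarrow> lubc c = s"
  unfolding lubc_def by (rule the_equality) (auto intro: is_lub_unique)

lemma chain_mono: "omega_chain c \<Longrightarrow> i \<le> j \<Longrightarrow> c i \<le> c j"
  unfolding omega_chain_def by (rule lift_Suc_mono_le) auto

primrec Sit :: "('n \<Rightarrow> 'n \<Rightarrow> 'd::{semiring_1,order}) \<Rightarrow> 'n set \<Rightarrow> nat \<Rightarrow> 'n \<Rightarrow> 'n \<Rightarrow> 'd" where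
  "Sit E N 0 = (\<lambda>n m. 0)"
| "Sit E N (Suc k) = (\<lambda>n m. kdelta n m + (\<Sum>a\<in>N. E n a * Sit E N k a m))"

context assumes fd: "flow_domain TYPE('d::{semiring_1,order})"
begin

lemma pos: "0 \<le> (x::'d)"
  using fd unfolding flow_domain_def by blast

lemma lubc: "omega_chain (c::nat \<Rightarrow> 'd) \<Longrightarrow> is_lub (range c) (lubc c)"
  using fd unfolding flow_domain_def by (metis lubc_eq)

lemma cont: "omega_chain (c::nat \<Rightarrow> 'd) \<Longrightarrow> is_lub (range c) s \<Longrightarrow>
        is_lub (range (\<lambda>i. a + c i)) (a + s) \<and>
        is_lub (range (\<lambda>i. c i + a)) (s + a) \<and>
        is_lub (range (\<lambda>i. a * c i)) (a * s) \<and>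
        is_lub (range (\<lambda>i. c i * a)) (s * a)"
  using fd unfolding flow_domain_def by blast

lemma mono_all:
  assumes "(a::'d) \<le> b"
  shows "c + a \<le> c + b \<and> a + c \<le> b + c \<and> c * a \<le> c * b \<and> a * c \<le> b * c"
proof -
  define ch where "ch = (\<lambda>i::nat. if i = 0 then a else b)"
  have oc: "omega_chain ch" using assms unfolding omega_chain_def ch_def by auto
  have rb: "range ch = {a, b}" unfolding ch_def by (auto simp: image_def)
  have "is_lub (range ch) b" unfolding rb is_lub_def using assms by auto
  from cont[OF oc this] have
     "is_lub (range (\<lambda>i. c + ch i)) (c + b) \<and> is_lub (range (\<lambda>i. ch i + c)) (b + c) \<and>
      is_lub (range (\<lambda>i. c * ch i)) (c * b) \<and> is_lub (range (\<lambda>i. ch i * c)) (b * c)" .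
  then have "c + ch 0 \<le> c + b" "ch 0 + c \<le> b + c" "c * ch 0 \<le> c * b" "ch 0 * c \<le> b * c"
    unfolding is_lub_def by (meson rangeI)+
  then show ?thesis by (simp add: ch_def)
qed

lemma add_mono2: "(a::'d) \<le> b \<Longrightarrow> c \<le> d \<Longrightarrow> a + c \<le> b + d"
  using mono_all by (meson order_trans)

lemma mult_mono_l: "(a::'d) \<le> b \<Longrightarrow> a * c \<le> b * c"
  using mono_all by blast

lemma sum_mono2: "(\<And>x. x \<in> A \<Longrightarrow> (f x::'d) \<le> g x) \<Longrightarrow> sum f A \<le> sum g A"
proof (induction A rule: infinite_finite_induct)
  case (insert x F)
  then show ?case by (simp add: add_mono2)
qed auto

lemma lub_le: "omega_chain (c::nat\<Rightarrow>'d) \<Longrightarrow> (\<And>i. c i \<le> z) \<Longrightarrow> lubc c \<le> z"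
  using lubc unfolding is_lub_def by blast

lemma le_lub: "omega_chain (c::nat\<Rightarrow>'d) \<Longrightarrow> c i \<le> lubc c"
  using lubc unfolding is_lub_def by blast

lemma lub_add:
  assumes a: "omega_chain (a::nat\<Rightarrow>'d)" and b: "omega_chain b"
  shows "omega_chain (\<lambda>i. a i + b i) \<and> lubc (\<lambda>i. a i + b i) = lubc a + lubc b"
proof
  show oc: "omega_chain (\<lambda>i. a i + b i)"
    using a b unfolding omega_chain_def by (simp add: add_mono2)
  show "lubc (\<lambda>i. a i + b i) = lubc a + lubc b"
  proof (rule lubc_eq, unfold is_lub_def, intro conjI allI impI ballI)
    fix y assume "y \<in> range (\<lambda>i. a i + b i)"
    then show "y \<le> lubc a + lubc b" using a b le_lub add_mono2 by auto
  next
    fix z assume z: "\<forall>y\<in>range (\<lambda>i. a i + b i). y \<le> z"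
    have 1: "lubc a + b i \<le> z" for i
    proof -
      have "is_lub (range (\<lambda>j. a j + b i)) (lubc a + b i)" using cont[OF a lubc[OF a]] by blast
      moreover have "a j + b i \<le> z" for j
      proof -
        have "a j + b i \<le> a (max i j) + b (max i j)"
          using add_mono2[OF chain_mono[OF a, of j "max i j"] chain_mono[OF b, of i "max i j"]] by simp
        then show ?thesis using z order_trans by blast
      qed
      ultimately show ?thesis unfolding is_lub_def by blast
    qed
    have "is_lub (range (\<lambda>i. lubc a + b i)) (lubc a + lubc b)" using cont[OF b lubc[OF b]] by blast
    then show "lubc a + lubc b \<le> z" using 1 unfolding is_lub_def by blast
  qed
qed

lemma lub_const: "omega_chain (\<lambda>i. (x::'d)) \<and> lubc (\<lambda>i. x) = x"
  by (auto simp: omega_chain_def is_lub_def intro!: lubc_eq)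

lemma lub_addc:
  assumes "omega_chain (a::nat\<Rightarrow>'d)"
  shows "omega_chain (\<lambda>i. x + a i) \<and> lubc (\<lambda>i. x + a i) = x + lubc a"
  using lub_add[OF conjunct1[OF lub_const] assms] lub_const by metis

lemma lub_multl:
  assumes a: "omega_chain (a::nat\<Rightarrow>'d)"
  shows "omega_chain (\<lambda>i. x * a i) \<and> lubc (\<lambda>i. x * a i) = x * lubc a"
  using a cont[OF a lubc[OF a]] mono_all lubc_eq unfolding omega_chain_def by blast

lemma lub_multr:
  assumes a: "omega_chain (a::nat\<Rightarrow>'d)"
  shows "omega_chain (\<lambda>i. a i * x) \<and> lubc (\<lambda>i. a i * x) = lubc a * x"
  using a cont[OF a lubc[OF a]] mono_all lubc_eq unfolding omega_chain_def by blast

lemma lub_sum: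
  assumes "finite A" "\<And>j. j \<in> A \<Longrightarrow> omega_chain (f j :: nat \<Rightarrow> 'd)"
  shows "omega_chain (\<lambda>i. \<Sum>j\<in>A. f j i) \<and> lubc (\<lambda>i. \<Sum>j\<in>A. f j i) = (\<Sum>j\<in>A. lubc (f j))"
  using assms
proof (induction A rule: finite_induct)
  case empty
  then show ?case using lub_const by simp
next
  case (insert x F)
  then show ?case using lub_add[of "f x" "\<lambda>i. \<Sum>j\<in>F. f j i"] by simp
qed

lemma Sit_chain: "Sit (E::'n\<Rightarrow>'n\<Rightarrow>'d) N k n m \<le> Sit E N (Suc k) n m"
proof (induction k arbitrary: n m)
  case 0 then show ?case by (simp add: pos)
next
  case (Suc k)
  show ?case
    apply (simp only: Sit.simps)
    apply (rule mono_all[THEN conjunct1])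
    apply (rule sum_mono2)
    apply (rule mono_all[THEN conjunct2, THEN conjunct2, THEN conjunct1])
    using Suc by simp
qed

lemma Sit_oc: "omega_chain (\<lambda>k. Sit (E::'n\<Rightarrow>'n\<Rightarrow>'d) N k n m)"
  unfolding omega_chain_def by (rule allI, rule Sit_chain)

lemma L_fix:
  fixes E :: "'n \<Rightarrow> 'n \<Rightarrow> 'd"
  assumes "finite N"
  shows "lubc (\<lambda>k. Sit E N k n m) = kdelta n m + (\<Sum>a\<in>N. E n a * lubc (\<lambda>k. Sit E N k a m))"
proof -
  have ocs: "omega_chain (\<lambda>k. E n a * Sit E N k a m)" 
    and lubs: "lubc (\<lambda>k. E n a * Sit E N k a m) = E n a * lubc (\<lambda>k. Sit E N k a m)" for a
    using lub_multl[OF Sit_oc[of E N a m], of "E n a"] by auto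
  have sm: "omega_chain (\<lambda>k. \<Sum>a\<in>N. E n a * Sit E N k a m) \<and>
     lubc (\<lambda>k. \<Sum>a\<in>N. E n a * Sit E N k a m) = (\<Sum>a\<in>N. lubc (\<lambda>k. E n a * Sit E N k a m))"
    by (rule lub_sum[OF assms ocs])
  have "lubc (\<lambda>k. Sit E N k n m) = lubc (\<lambda>k. Sit E N (Suc k) n m)"
  proof (rule sym, rule lubc_eq, unfold is_lub_def, intro conjI allI impI ballI)
    fix y assume "y \<in> range (\<lambda>k. Sit E N (Suc k) n m)"
    then obtain k where "y = Sit E N (Suc k) n m" by auto
    then show "y \<le> lubc (\<lambda>k. Sit E N k n m)" using le_lub[OF Sit_oc[of E N n m], of "Suc k"] by simp
  next
    fix z assume z: "\<forall>y\<in>range (\<lambda>k. Sit E N (Suc k) n m). y \<le> z"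
    have zk: "Sit E N k n m \<le> z" for k using order_trans[OF Sit_chain[of E N k n m]] z by auto
    show "lubc (\<lambda>k. Sit E N k n m) \<le> z" by (rule lub_le[OF Sit_oc], rule zk)
  qed
  also have "\<dots> = lubc (\<lambda>k. kdelta n m + (\<Sum>a\<in>N. E n a * Sit E N k a m))" by simp
  also have "\<dots> = kdelta n m + lubc (\<lambda>k. \<Sum>a\<in>N. E n a * Sit E N k a m)"
    using lub_addc[OF conjunct1[OF sm], of "kdelta n m"] by simp
  also have "\<dots> = kdelta n m + (\<Sum>a\<in>N. lubc (\<lambda>k. E n a * Sit E N k a m))"
    using sm by simp
  also have "\<dots> = kdelta n m + (\<Sum>a\<in>N. E n a * lubc (\<lambda>k. Sit E N k a m))"
    using lubs by simp
  finally show ?thesis .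
qed

lemma is_cap_L:
  fixes G :: "('n, 'a, 'd) graph"
  assumes "finite (nodes G)"
  shows "is_cap G (\<lambda>n m. lubc (\<lambda>k. Sit (edge G) (nodes G) k n m))"
  unfolding is_cap_def
proof (intro conjI allI impI ballI)
  fix n m show "lubc (\<lambda>k. Sit (edge G) (nodes G) k n m) = kdelta n m +
     (\<Sum>a\<in>nodes G. edge G n a * lubc (\<lambda>k. Sit (edge G) (nodes G) k a m))"
    using L_fix[OF assms] .
next
  fix c' n m
  assume c': "\<forall>n\<in>nodes G. \<forall>n'\<in>nodes G \<union> sinks G.
          c' n n' = kdelta n n' + (\<Sum>n''\<in>nodes G. edge G n n'' * c' n'' n')"
    and n: "n \<in> nodes G" and m: "m \<in> nodes G \<union> sinks G"
  have "\<forall>n\<in>nodes G. Sit (edge G) (nodes G) k n m \<le> c' n m" for k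
  proof (induction k)
    case 0 then show ?case by (simp add: pos)
  next
    case (Suc k)
    show ?case
    proof
      fix n assume n: "n \<in> nodes G"
      have "Sit (edge G) (nodes G) (Suc k) n m \<le> kdelta n m + (\<Sum>n''\<in>nodes G. edge G n n'' * c' n'' m)"
        apply (simp only: Sit.simps)
        apply (rule mono_all[THEN conjunct1])
        apply (rule sum_mono2)
        apply (rule mono_all[THEN conjunct2, THEN conjunct2, THEN conjunct1])
        using Suc by simp
      then show "Sit (edge G) (nodes G) (Suc k) n m \<le> c' n m" using c' n m by simp
    qed
  qed
  then show "lubc (\<lambda>k. Sit (edge G) (nodes G) k n m) \<le> c' n m"
    using n by (intro lub_le[OF Sit_oc]) blast
qed

lemma cap_eq:
  fixes G :: "('n, 'a, 'd) graph"
  assumes "finite (nodes G)" "n \<in> nodes G" "m \<in> nodes G \<union> sinks G"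
  shows "cap G n m = lubc (\<lambda>k. Sit (edge G) (nodes G) k n m)"
proof -
  have c: "is_cap G (cap G)" unfolding cap_def by (rule someI[of "is_cap G"], rule is_cap_L[OF assms(1)])
  have l: "is_cap G (\<lambda>n m. lubc (\<lambda>k. Sit (edge G) (nodes G) k n m))" by (rule is_cap_L[OF assms(1)])
  define L where "L = (\<lambda>n m. lubc (\<lambda>k. Sit (edge G) (nodes G) k n m))"
  have l': "is_cap G L" using l unfolding L_def .
  have h1: "\<forall>n\<in>nodes G. \<forall>n'\<in>nodes G \<union> sinks G. cap G n n' \<le> L n n'"
    by (rule mp[OF spec[OF conjunct2[OF c[unfolded is_cap_def]], of L] conjunct1[OF l'[unfolded is_cap_def]]])
  have 1: "cap G n m \<le> lubc (\<lambda>k. Sit (edge G) (nodes G) k n m)"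
    using bspec[OF bspec[OF h1 assms(2)] assms(3)] unfolding L_def by simp
  have h2: "\<forall>n\<in>nodes G. \<forall>n'\<in>nodes G \<union> sinks G. L n n' \<le> cap G n n'"
    by (rule mp[OF spec[OF conjunct2[OF l'[unfolded is_cap_def]], of "cap G"] conjunct1[OF c[unfolded is_cap_def]]])
  have 2: "lubc (\<lambda>k. Sit (edge G) (nodes G) k n m) \<le> cap G n m"
    using bspec[OF bspec[OF h2 assms(2)] assms(3)] unfolding L_def by simp
  from 1 2 show ?thesis by (rule order_antisym)
qed

end

lemma dsum_r: "finite N \<Longrightarrow> m \<in> N \<Longrightarrow> (\<Sum>a\<in>N. (f a::'d::semiring_1) * kdelta a m) = f m"
  by (simp add: kdelta_def if_distrib cong: if_cong)
lemma dsum_l: "finite N \<Longrightarrow> m \<in> N \<Longrightarrow> (\<Sum>a\<in>N. kdelta m a * (f a::'d::semiring_1)) = f m"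
proof -
  have "\<And>a. kdelta m a * f a = (if m = a then f a else 0)" by (simp add: kdelta_def)
  then show "finite N \<Longrightarrow> m \<in> N \<Longrightarrow> ?thesis" by (simp add: sum.delta)
qed

lemma Sit_right:
  fixes E :: "'n \<Rightarrow> 'n \<Rightarrow> 'd::{semiring_1,order}"
  assumes "finite N"
  shows "n \<in> N \<Longrightarrow> m \<in> N \<Longrightarrow> Sit E N (Suc k) n m = kdelta n m + (\<Sum>b\<in>N. Sit E N k n b * E b m)"
proof (induction k arbitrary: n m)
  case 0 then show ?case by simp
next
  case (Suc k)
  have "Sit E N (Suc (Suc k)) n m = kdelta n m + (\<Sum>a\<in>N. E n a * (kdelta a m + (\<Sum>b\<in>N. Sit E N k a b * E b m)))"
    using Suc by simp
  also have "(\<Sum>a\<in>N. E n a * (kdelta a m + (\<Sum>b\<in>N. Sit E N k a b * E b m)))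
     = (\<Sum>a\<in>N. E n a * kdelta a m) + (\<Sum>a\<in>N. \<Sum>b\<in>N. E n a * Sit E N k a b * E b m)"
    by (simp only: distrib_left sum.distrib sum_distrib_left mult.assoc)
  also have "(\<Sum>a\<in>N. E n a * kdelta a m) = E n m" using dsum_r[OF assms Suc.prems(2)] .
  also have "(\<Sum>a\<in>N. \<Sum>b\<in>N. E n a * Sit E N k a b * E b m) = (\<Sum>b\<in>N. \<Sum>a\<in>N. E n a * Sit E N k a b * E b m)"
    by (rule sum.swap)
  also have "E n m + (\<Sum>b\<in>N. \<Sum>a\<in>N. E n a * Sit E N k a b * E b m)
     = (\<Sum>b\<in>N. (kdelta n b + (\<Sum>a\<in>N. E n a * Sit E N k a b)) * E b m)"
    using dsum_l[OF assms Suc.prems(1), of "\<lambda>b. E b m"] by (simp add: distrib_right sum.distrib sum_distrib_right mult.assoc)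
  also have "kdelta n m + \<dots> = kdelta n m + (\<Sum>b\<in>N. Sit E N (Suc k) n b * E b m)" by simp
  finally show ?case .
qed

definition xit :: "('n \<Rightarrow> 'd::{semiring_1,order}) \<Rightarrow> ('n, 'a, 'd) graph \<Rightarrow> nat \<Rightarrow> 'n \<Rightarrow> 'd" where
  "xit fin G k n = (\<Sum>n'\<in>nodes G. fin n' * Sit (edge G) (nodes G) k n' n)"

context assumes fd: "flow_domain TYPE('d::{semiring_1,order})"
begin

lemma xit_oc: "finite (nodes (G::('n,'a,'d) graph)) \<Longrightarrow> omega_chain (\<lambda>k. xit fin G k n)
   \<and> lubc (\<lambda>k. xit fin G k n) = (\<Sum>n'\<in>nodes G. fin n' * lubc (\<lambda>k. Sit (edge G) (nodes G) k n' n))"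
proof -
  assume f: "finite (nodes G)"
  have oc: "omega_chain (\<lambda>k. fin n' * Sit (edge G) (nodes G) k n' n)"
    and eq: "lubc (\<lambda>k. fin n' * Sit (edge G) (nodes G) k n' n) = fin n' * lubc (\<lambda>k. Sit (edge G) (nodes G) k n' n)" for n'
    using lub_multl[OF fd Sit_oc[OF fd, of "edge G" "nodes G" n' n], of "fin n'"] by auto
  have "omega_chain (\<lambda>k. \<Sum>n'\<in>nodes G. fin n' * Sit (edge G) (nodes G) k n' n) \<and>
    lubc (\<lambda>k. \<Sum>n'\<in>nodes G. fin n' * Sit (edge G) (nodes G) k n' n) =
    (\<Sum>n'\<in>nodes G. lubc (\<lambda>k. fin n' * Sit (edge G) (nodes G) k n' n))"
    by (rule lub_sum[OF fd f oc])
  then show ?thesis unfolding xit_def by (simp add: eq)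
qed

lemma flow_lub: "finite (nodes (G::('n,'a,'d) graph)) \<Longrightarrow> n \<in> nodes G \<Longrightarrow> flow fin G n = lubc (\<lambda>k. xit fin G k n)"
proof -
  assume f: "finite (nodes G)" and n: "n \<in> nodes G"
  have "flow fin G n = (\<Sum>n'\<in>nodes G. fin n' * lubc (\<lambda>k. Sit (edge G) (nodes G) k n' n))"
    unfolding flow_def by (rule sum.cong) (use n cap_eq[OF fd f] in auto)
  then show ?thesis using xit_oc[OF f] by simp
qed

lemma xit_Suc:
  fixes G :: "('n, 'a, 'd) graph"
  assumes "finite (nodes G)" "n \<in> nodes G"
  shows "xit fin G (Suc k) n = fin n + (\<Sum>b\<in>nodes G. xit fin G k b * edge G b n)"
proof -
  have "xit fin G (Suc k) n = (\<Sum>n'\<in>nodes G. fin n' * (kdelta n' n + (\<Sum>b\<in>nodes G. Sit (edge G) (nodes G) k n' b * edge G b n)))"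
    unfolding xit_def by (rule sum.cong[OF refl]) (simp only: Sit_right[OF assms(1) _ assms(2)])
  also have "\<dots> = (\<Sum>n'\<in>nodes G. fin n' * kdelta n' n) + (\<Sum>n'\<in>nodes G. \<Sum>b\<in>nodes G. fin n' * Sit (edge G) (nodes G) k n' b * edge G b n)"
    by (simp only: distrib_left sum.distrib sum_distrib_left mult.assoc)
  also have "(\<Sum>n'\<in>nodes G. fin n' * kdelta n' n) = fin n" by (rule dsum_r[OF assms])
  also have "(\<Sum>n'\<in>nodes G. \<Sum>b\<in>nodes G. fin n' * Sit (edge G) (nodes G) k n' b * edge G b n)
     = (\<Sum>b\<in>nodes G. \<Sum>n'\<in>nodes G. fin n' * Sit (edge G) (nodes G) k n' b * edge G b n)"
    by (rule sum.swap)
  also have "\<dots> = (\<Sum>b\<in>nodes G. xit fin G k b * edge G b n)"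
    unfolding xit_def by (simp only: sum_distrib_right)
  finally show ?thesis .
qed

lemma lub_shift: "omega_chain (c::nat \<Rightarrow> 'd) \<Longrightarrow> lubc (\<lambda>k. c (Suc k)) = lubc c"
proof -
  assume oc: "omega_chain c"
  show ?thesis
  proof (rule lubc_eq, unfold is_lub_def, intro conjI allI impI ballI)
    fix y assume "y \<in> range (\<lambda>k. c (Suc k))"
    then obtain k where "y = c (Suc k)" by auto
    then show "y \<le> lubc c" using le_lub[OF fd oc, of "Suc k"] by simp
  next
    fix z assume z: "\<forall>y\<in>range (\<lambda>k. c (Suc k)). y \<le> z"
    have zk: "c k \<le> z" for k using order_trans[of "c k" "c (Suc k)" z] oc z
      unfolding omega_chain_def by auto
    show "lubc c \<le> z" by (rule lub_le[OF fd oc], rule zk)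
  qed
qed

lemma flow_fix:
  fixes G :: "('n, 'a, 'd) graph"
  assumes f: "finite (nodes G)" and n: "n \<in> nodes G"
  shows "flow fin G n = fin n + (\<Sum>b\<in>nodes G. flow fin G b * edge G b n)"
proof -
  have oc: "omega_chain (\<lambda>k. xit fin G k b)" for b using xit_oc[OF f] by auto
  have ocm: "omega_chain (\<lambda>k. xit fin G k b * edge G b n)"
    and lm: "lubc (\<lambda>k. xit fin G k b * edge G b n) = lubc (\<lambda>k. xit fin G k b) * edge G b n" for b
    using lub_multr[OF fd oc[of b], of "edge G b n"] by auto
  have sm: "omega_chain (\<lambda>k. \<Sum>b\<in>nodes G. xit fin G k b * edge G b n) \<and>
     lubc (\<lambda>k. \<Sum>b\<in>nodes G. xit fin G k b * edge G b n) = (\<Sum>b\<in>nodes G. lubc (\<lambda>k. xit fin G k b * edge G b n))"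
    by (rule lub_sum[OF fd f ocm])
  have ad: "lubc (\<lambda>k. fin n + (\<Sum>b\<in>nodes G. xit fin G k b * edge G b n)) = fin n + lubc (\<lambda>k. \<Sum>b\<in>nodes G. xit fin G k b * edge G b n)"
    using lub_addc[OF fd conjunct1[OF sm], of "fin n"] by auto
  have "flow fin G n = lubc (\<lambda>k. xit fin G k n)" by (rule flow_lub[OF f n])
  also have "\<dots> = lubc (\<lambda>k. xit fin G (Suc k) n)" by (rule lub_shift[OF oc, symmetric])
  also have "\<dots> = lubc (\<lambda>k. fin n + (\<Sum>b\<in>nodes G. xit fin G k b * edge G b n))"
    by (simp only: xit_Suc[OF f n])
  also have "\<dots> = fin n + (\<Sum>b\<in>nodes G. lubc (\<lambda>k. xit fin G k b * edge G b n))"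
    using ad sm by simp
  also have "\<dots> = fin n + (\<Sum>b\<in>nodes G. lubc (\<lambda>k. xit fin G k b) * edge G b n)"
    by (simp only: lm)
  also have "\<dots> = fin n + (\<Sum>b\<in>nodes G. flow fin G b * edge G b n)"
    by (rule arg_cong[where f="\<lambda>x. fin n + x"], rule sum.cong[OF refl]) (simp only: flow_lub[OF f])
  finally show ?thesis .
qed

lemma flow_least:
  fixes G :: "('n, 'a, 'd) graph"
  assumes f: "finite (nodes G)"
    and y: "\<forall>n\<in>nodes G. fin n + (\<Sum>b\<in>nodes G. y b * edge G b n) \<le> y n"
    and n: "n \<in> nodes G"
  shows "flow fin G n \<le> y n"
proof -
  have H: "\<forall>n\<in>nodes G. xit fin G k n \<le> y n" for k
  proof (induction k)
    case 0 then show ?case by (simp add: xit_def pos[OF fd])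
  next
    case (Suc k)
    show ?case
    proof
      fix n assume n: "n \<in> nodes G"
      have "xit fin G (Suc k) n \<le> fin n + (\<Sum>b\<in>nodes G. y b * edge G b n)"
        unfolding xit_Suc[OF f n]
        apply (rule mono_all[OF fd, THEN conjunct1])
        apply (rule sum_mono2[OF fd])
        apply (rule mult_mono_l[OF fd])
        using Suc by simp
      then show "xit fin G (Suc k) n \<le> y n" using y n order_trans by blast
    qed
  qed
  have "lubc (\<lambda>k. xit fin G k n) \<le> y n"
    by (rule lub_le[OF fd conjunct1[OF xit_oc[OF f]]]) (use H n in blast)
  then show ?thesis by (simp only: flow_lub[OF f n])
qed

lemma key:
  fixes G G1 :: "('n, 'a, 'd) graph"
  assumes f: "finite (nodes G)"
    and un: "nodes G = nodes G1 \<union> N2" and dj: "nodes G1 \<inter> N2 = {}"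
    and ed: "\<forall>a\<in>nodes G1. \<forall>n\<in>nodes G1. edge G1 a n = edge G a n"
    and n: "n \<in> nodes G1"
  shows "flow (proj fin G (nodes G1)) G1 n = flow fin G n"
proof -
  define N1 where "N1 = nodes G1"
  have f1: "finite N1" using f un N1_def by simp
  have f2: "finite N2" using f un by simp
  have diff: "nodes G - N1 = N2" using un dj N1_def by blast
  define x where "x = flow fin G"
  define b where "b = proj fin G N1"
  define x1 where "x1 = flow b G1"
  have split: "(\<Sum>a\<in>nodes G. h a) = (\<Sum>a\<in>N1. h a) + (\<Sum>a\<in>N2. h a)" for h :: "'n \<Rightarrow> 'd"
    using un dj f1 f2 N1_def by (simp add: sum.union_disjoint)
  have bdef: "b n = fin n + (\<Sum>a\<in>N2. x a * edge G a n)" for n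
    unfolding b_def proj_def x_def diff ..
  have xG1: "x n = b n + (\<Sum>a\<in>N1. x a * edge G1 a n)" if "n \<in> N1" for n
  proof -
    have "x n = fin n + (\<Sum>a\<in>nodes G. x a * edge G a n)"
      unfolding x_def using flow_fix[OF f] that un N1_def by blast
    also have "\<dots> = b n + (\<Sum>a\<in>N1. x a * edge G a n)" unfolding split bdef
      by (simp add: ac_simps)
    also have "\<dots> = b n + (\<Sum>a\<in>N1. x a * edge G1 a n)" using ed that N1_def by simp
    finally show ?thesis .
  qed
  have le1: "x1 n \<le> x n" if "n \<in> N1" for n
    unfolding x1_def using flow_least[OF f1[unfolded N1_def]] xG1 that N1_def
    by (metis order_refl)
  define y where "y n = (if n \<in> N1 then x1 n else x n)" for n
  have yx: "y a \<le> x a" for a using le1 y_def by simp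
  have ypre: "\<forall>n\<in>nodes G. fin n + (\<Sum>a\<in>nodes G. y a * edge G a n) \<le> y n"
  proof
    fix n assume nG: "n \<in> nodes G"
    show "fin n + (\<Sum>a\<in>nodes G. y a * edge G a n) \<le> y n"
    proof (cases "n \<in> N1")
      case True
      have "fin n + (\<Sum>a\<in>nodes G. y a * edge G a n)
          = b n + (\<Sum>a\<in>N1. x1 a * edge G1 a n)"
        unfolding split bdef using True ed N1_def y_def dj
        by (simp add: ac_simps disjoint_iff)
      also have "\<dots> = x1 n" unfolding x1_def
        using flow_fix[OF f1[unfolded N1_def]] True N1_def by simp
      finally show ?thesis using True y_def by simp
    next
      case False
      have "fin n + (\<Sum>a\<in>nodes G. y a * edge G a n) \<le> fin n + (\<Sum>a\<in>nodes G. x a * edge G a n)"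
        apply (rule mono_all[OF fd, THEN conjunct1])
        apply (rule sum_mono2[OF fd])
        apply (rule mult_mono_l[OF fd])
        using yx by simp
      also have "\<dots> = x n" unfolding x_def using flow_fix[OF f nG] by simp
      finally show ?thesis using False y_def by simp
    qed
  qed
  have "x n \<le> y n" unfolding x_def using flow_least[OF f ypre] n un by blast
  then have "x n \<le> x1 n" using n N1_def y_def by simp
  with le1[of n] n N1_def show ?thesis unfolding x_def x1_def b_def by simp
qed

end

lemma flow_cong: "(\<And>n. n \<in> nodes G \<Longrightarrow> f n = g n) \<Longrightarrow> flow f G m = flow g G m"
  unfolding flow_def by simp

theorem mainTheorem4:
  fixes G G1 G2 :: "('n, 'a::semilattice_sup, 'd::{semiring_1,order}) graph"
  assumes fd: "flow_domain TYPE('d)"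
    and wf: "wf_graph G" "wf_graph G1" "wf_graph G2"
  shows
    "(\<forall>fin fin1 fin2 fin' fin1' fin2'.
        in_comp fin G fin1 G1 fin2 G2 \<longrightarrow>
        inflow_equiv fin1 G1 fin1' \<longrightarrow> inflow_equiv fin2 G2 fin2' \<longrightarrow>
        in_comp fin' G fin1' G1 fin2' G2 \<longrightarrow>
        inflow_equiv fin G fin')
     \<and>
     (\<forall>fin fin1 fin2 fin'.
        in_comp fin G fin1 G1 fin2 G2 \<longrightarrow> inflow_equiv fin G fin' \<longrightarrow>
        (\<exists>fin1' fin2'. inflow_equiv fin1 G1 fin1' \<and> inflow_equiv fin2 G2 fin2' \<and>
           in_comp fin' G fin1' G1 fin2' G2))"
proof -
  have f: "finite (nodes G)" using wf unfolding wf_graph_def by blast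
  have K1: "flow (proj h G (nodes G1)) G1 n = flow h G n"
    if "is_graph_union G G1 G2" "n \<in> nodes G1" for h :: "'n \<Rightarrow> 'd" and n
    apply (rule key[OF fd f, of G1 "nodes G2"])
    using that unfolding is_graph_union_def by auto
  have K2: "flow (proj h G (nodes G2)) G2 n = flow h G n"
    if "is_graph_union G G1 G2" "n \<in> nodes G2" for h :: "'n \<Rightarrow> 'd" and n
    apply (rule key[OF fd f, of G2 "nodes G1"])
    using that unfolding is_graph_union_def by auto
  have FG: "nodes G = nodes G1 \<union> nodes G2" if "is_graph_union G G1 G2"
    using that unfolding is_graph_union_def by auto
  show ?thesis
  proof (intro conjI allI impI)
    fix fin fin1 fin2 fin' fin1' fin2'
    assume c: "in_comp fin G fin1 G1 fin2 G2" and e1: "inflow_equiv fin1 G1 fin1'"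
      and e2: "inflow_equiv fin2 G2 fin2'" and c': "in_comp fin' G fin1' G1 fin2' G2"
    have u: "is_graph_union G G1 G2" using c unfolding in_comp_def by blast
    show "inflow_equiv fin G fin'"
      unfolding inflow_equiv_def
    proof
      fix n assume "n \<in> nodes G"
      then consider "n \<in> nodes G1" | "n \<in> nodes G2" using FG[OF u] by blast
      then show "flow fin G n = flow fin' G n"
      proof cases
        case 1
        have "flow fin G n = flow fin1 G1 n" using K1[OF u 1] c flow_cong[of G1 "proj fin G (nodes G1)" fin1]
          unfolding in_comp_def by metis
        also have "\<dots> = flow fin1' G1 n" using e1 1 unfolding inflow_equiv_def by blast
        also have "\<dots> = flow fin' G n" using K1[OF u 1] c' flow_cong[of G1 "proj fin' G (nodes G1)" fin1']
          unfolding in_comp_def by metis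
        finally show ?thesis .
      next
        case 2
        have "flow fin G n = flow fin2 G2 n" using K2[OF u 2] c flow_cong[of G2 "proj fin G (nodes G2)" fin2]
          unfolding in_comp_def by metis
        also have "\<dots> = flow fin2' G2 n" using e2 2 unfolding inflow_equiv_def by blast
        also have "\<dots> = flow fin' G n" using K2[OF u 2] c' flow_cong[of G2 "proj fin' G (nodes G2)" fin2']
          unfolding in_comp_def by metis
        finally show ?thesis .
      qed
    qed
  next
    fix fin fin1 fin2 fin'
    assume c: "in_comp fin G fin1 G1 fin2 G2" and e: "inflow_equiv fin G fin'"
    have u: "is_graph_union G G1 G2" using c unfolding in_comp_def by blast
    show "\<exists>fin1' fin2'. inflow_equiv fin1 G1 fin1' \<and> inflow_equiv fin2 G2 fin2' \<and>
           in_comp fin' G fin1' G1 fin2' G2"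
    proof (intro exI conjI)
      show "in_comp fin' G (proj fin' G (nodes G1)) G1 (proj fin' G (nodes G2)) G2"
        using u unfolding in_comp_def by simp
      show "inflow_equiv fin1 G1 (proj fin' G (nodes G1))"
        unfolding inflow_equiv_def
      proof
        fix n assume n: "n \<in> nodes G1"
        have "flow fin1 G1 n = flow fin G n" using K1[OF u n] c flow_cong[of G1 "proj fin G (nodes G1)" fin1]
          unfolding in_comp_def by metis
        also have "\<dots> = flow fin' G n" using e n FG[OF u] unfolding inflow_equiv_def by blast
        also have "\<dots> = flow (proj fin' G (nodes G1)) G1 n" using K1[OF u n] by simp
        finally show "flow fin1 G1 n = flow (proj fin' G (nodes G1)) G1 n" .
      qed
      show "inflow_equiv fin2 G2 (proj fin' G (nodes G2))"
        unfolding inflow_equiv_def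
      proof
        fix n assume n: "n \<in> nodes G2"
        have "flow fin2 G2 n = flow fin G n" using K2[OF u n] c flow_cong[of G2 "proj fin G (nodes G2)" fin2]
          unfolding in_comp_def by metis
        also have "\<dots> = flow fin' G n" using e n FG[OF u] unfolding inflow_equiv_def by blast
        also have "\<dots> = flow (proj fin' G (nodes G2)) G2 n" using K2[OF u n] by simp
        finally show "flow fin2 G2 n = flow (proj fin' G (nodes G2)) G2 n" .
      qed
    qed
  qed
qed

end
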